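(* Let $1<p<\infty$, let $\alpha\in SOS(\mathbb{R}_+)$, and let $\omega$ be its exponent function, i.e. $\alpha(t)=te^{\omega(t)}$. Then the function $\mathfrak c(t,x):=e^{i\omega(t)(x+i/p)}r_p(x)$, $(t,x)\in\mathbb{R}_+\times\mathbb{R}$, belongs to $C_b(\mathbb{R}_+,V(\mathbb{R}))$.
   Context: $\mathbb{R}_+=(0,\infty)$. $SO(\mathbb{R}_+)$: bounded continuous complex $f$ on $\mathbb{R}_+$ with $\lim_{r\to s}\sup\{|f(t)-f(\tau)|:t,\tau\in[\lambda r,r]\}=0$ for $s\in\{0,\infty\}$ and each (equivalently some) $\lambda\in(0,1)$. $SOS(\mathbb{R}_+)$: orientation-preserving diffeomorphisms $\alpha$ of $\mathbb{R}_+$ onto itself with no fixed points in $\mathbb{R}_+$ such that $\log\alpha'$ is bounded continuous and $\alpha'\in SO(\mathbb{R}_+)$; for such $\alpha$ the exponent function $\omega(t)=\log[\alpha(t)/t]$ is real-valued and lies in $SO(\mathbb{R}_+)$. $r_p(x)=1/\sinh[\pi(x+i/p)]$. $V(\mathbb{R})$ is the Banach algebra of absolutely continuous functions of finite total variation on $\mathbb{R}$ with norm $\|a\|_V=\|a\|_{L^\infty(\mathbb{R})}+\int_{\mathbb{R}}|a'(x)|dx$; $C_b(\mathbb{R}_+,V(\mathbb{R}))$ is the Banach algebra of bounded continuous maps $t\mapsto\mathfrak a(t,\cdot)$ from $\mathbb{R}_+$ to $V(\mathbb{R})$ with norm $\sup_t\|\mathfrak a(t,\cdot)\|_V$. *)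

theory Defs
  imports "HOL-Analysis.Analysis"
begin

definition osc :: "(real \<Rightarrow> complex) \<Rightarrow> real \<Rightarrow> real \<Rightarrow> real" where
  "osc f l r = Sup {norm (f t - f \<tau>) | t \<tau>. t \<in> {l * r..r} \<and> \<tau> \<in> {l * r..r}}"

definition SO :: "(real \<Rightarrow> complex) \<Rightarrow> bool" where
  "SO f \<longleftrightarrow> bounded (f ` {0<..}) \<and> continuous_on {0<..} f \<and>
     (\<forall>l. 0 < l \<and> l < 1 \<longrightarrow>
        ((osc f l \<longlongrightarrow> 0) (at_right 0)) \<and> ((osc f l \<longlongrightarrow> 0) at_top))"

definition C1_pos :: "(real \<Rightarrow> real) \<Rightarrow> bool" where
  "C1_pos f \<longleftrightarrow> (\<exists>d. (\<forall>t>0. (f has_real_derivative d t) (at t)) \<and> continuous_on {0<..} d)"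

definition diffeo_pos :: "(real \<Rightarrow> real) \<Rightarrow> bool" where
  "diffeo_pos a \<longleftrightarrow> bij_betw a {0<..} {0<..} \<and> C1_pos a \<and> C1_pos (inv_into {0<..} a)"

definition SOS :: "(real \<Rightarrow> real) \<Rightarrow> bool" where
  "SOS a \<longleftrightarrow> diffeo_pos a \<and> strict_mono_on {0<..} a \<and> (\<forall>t>0. a t \<noteq> t) \<and>
     (\<forall>t>0. deriv a t > 0) \<and>
     bounded ((\<lambda>t. ln (deriv a t)) ` {0<..}) \<and> continuous_on {0<..} (\<lambda>t. ln (deriv a t)) \<and>
     SO (\<lambda>t. complex_of_real (deriv a t))"

definition r_p :: "real \<Rightarrow> real \<Rightarrow> complex" where
  "r_p p x = 1 / sinh (complex_of_real pi * (complex_of_real x + \<i> / complex_of_real p))"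

definition abs_cont_on :: "(real \<Rightarrow> complex) \<Rightarrow> real \<Rightarrow> real \<Rightarrow> bool" where
  "abs_cont_on f u v \<longleftrightarrow> (\<forall>e>0. \<exists>d>0. \<forall>(n::nat) (a::nat \<Rightarrow> real) b.
      (\<forall>k<n. u \<le> a k \<and> a k \<le> b k \<and> b k \<le> v) \<and>
      (\<forall>j<n. \<forall>k<n. j \<noteq> k \<longrightarrow> b j \<le> a k \<or> b k \<le> a j) \<and>
      (\<Sum>k<n. b k - a k) < d \<longrightarrow> (\<Sum>k<n. norm (f (b k) - f (a k))) < e)"

definition variation_sums :: "(real \<Rightarrow> complex) \<Rightarrow> real set" where
  "variation_sums f = {(\<Sum>k<n. norm (f (x (Suc k)) - f (x k))) | n x. \<forall>k<n. x k < x (Suc k)}"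

definition finite_total_variation :: "(real \<Rightarrow> complex) \<Rightarrow> bool" where
  "finite_total_variation f \<longleftrightarrow> bdd_above (variation_sums f)"

definition in_V :: "(real \<Rightarrow> complex) \<Rightarrow> bool" where
  "in_V f \<longleftrightarrow> (\<forall>u v. u \<le> v \<longrightarrow> abs_cont_on f u v) \<and> finite_total_variation f"

text \<open>Norm of V(R): L-infinity norm (= sup norm, the functions being continuous) plus
  the L^1 norm of the (a.e.) derivative.\<close>
definition V_norm :: "(real \<Rightarrow> complex) \<Rightarrow> real" where
  "V_norm f = (SUP x. norm (f x)) + (\<integral>x. norm (vector_derivative f (at x)) \<partial>lebesgue)"

definition in_Cb_V :: "(real \<Rightarrow> real \<Rightarrow> complex) \<Rightarrow> bool" where
  "in_Cb_V c \<longleftrightarrow>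
     (\<forall>t>0. in_V (c t)) \<and>
     (\<forall>t>0. \<forall>e>0. \<exists>d>0. \<forall>s>0. \<bar>s - t\<bar> < d \<longrightarrow> V_norm (\<lambda>x. c s x - c t x) < e) \<and>
     (\<exists>M. \<forall>t>0. V_norm (c t) \<le> M)"

end

theory Submission imports Defs "HOL-Probability.Probability" begin

lemma integrable_w: "integrable lebesgue (\<lambda>x::real. inverse (1 + x\<^sup>2))"
proof -
  have "integrable lborel (\<lambda>x::real. inverse (1 + x\<^sup>2))"
    using integrable_inverse_1_plus_square by (simp add: set_integrable_def einterval_eq_UNIV)
  then show ?thesis
    by (subst integrable_completion) auto
qed

lemma var_bound:
  fixes f f' :: "real \<Rightarrow> complex" and \<phi> \<phi>' :: "real \<Rightarrow> real"
  assumes "\<And>x. (f has_vector_derivative f' x) (at x)"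
    and "\<And>x. (\<phi> has_real_derivative \<phi>' x) (at x)"
    and "\<And>x. norm (f' x) \<le> \<phi>' x" and "a \<le> b"
  shows "norm (f b - f a) \<le> \<phi> b - \<phi> a"
proof (cases "a = b")
  case False
  then have "a < b" using assms by simp
  show ?thesis
  proof (rule differentiable_bound_general[OF \<open>a < b\<close>])
    show "continuous_on {a..b} f"
      by (meson assms(1) continuous_at_imp_continuous_on has_vector_derivative_continuous)
    show "continuous_on {a..b} \<phi>"
      by (meson assms(2) DERIV_isCont continuous_at_imp_continuous_on)
    show "\<And>x. (\<phi> has_vector_derivative \<phi>' x) (at x)"
      using assms(2) has_real_derivative_iff_has_vector_derivative by blast
  qed (use assms in auto)
qed simp

definition IW :: real where "IW = (\<integral>x. inverse (1 + x\<^sup>2) \<partial>lebesgue)"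

lemma generic_V:
  fixes f f' :: "real \<Rightarrow> complex"
  assumes der: "\<And>x. (f has_vector_derivative f' x) (at x)"
    and cont: "continuous_on UNIV f'"
    and bd: "\<And>x. norm (f' x) \<le> K * inverse (1 + x\<^sup>2)"
    and fb: "\<And>x. norm (f x) \<le> B"
  shows "in_V f" and "V_norm f \<le> B + K * IW"
proof -
  have K0: "0 \<le> K" using bd[of 0] by (simp add: order_trans[OF norm_ge_zero])
  have inv_le: "inverse (1 + x\<^sup>2) \<le> 1" for x :: real
  proof -
    have "1 \<le> 1 + x\<^sup>2" by simp
    then show ?thesis by (simp add: inverse_le_1_iff)
  qed
  have lip: "norm (f b - f a) \<le> (K + 1) * b - (K + 1) * a" if "a \<le> b" for a b
  proof (rule var_bound[OF der _ _ that])
    show "((\<lambda>x. (K + 1) * x) has_real_derivative (K + 1)) (at x)" for x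
      by (auto intro!: derivative_eq_intros)
    show "norm (f' x) \<le> K + 1" for x
      using bd[of x] mult_left_mono[OF inv_le[of x] K0] by linarith
  qed
  have var: "norm (f b - f a) \<le> K * arctan b - K * arctan a" if "a \<le> b" for a b
  proof (rule var_bound[OF der _ _ that])
    show "((\<lambda>x. K * arctan x) has_real_derivative (K * inverse (1 + x\<^sup>2))) (at x)" for x
      by (auto intro!: derivative_eq_intros DERIV_arctan)
    show "norm (f' x) \<le> K * inverse (1 + x\<^sup>2)" for x by (rule bd)
  qed
  have ac: "abs_cont_on f u v" for u v
    unfolding abs_cont_on_def
  proof (intro allI impI)
    fix e :: real assume "e > 0"
    show "\<exists>d>0. \<forall>(n::nat) (a::nat \<Rightarrow> real) b.
      (\<forall>k<n. u \<le> a k \<and> a k \<le> b k \<and> b k \<le> v) \<and>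
      (\<forall>j<n. \<forall>k<n. j \<noteq> k \<longrightarrow> b j \<le> a k \<or> b k \<le> a j) \<and>
      (\<Sum>k<n. b k - a k) < d \<longrightarrow> (\<Sum>k<n. norm (f (b k) - f (a k))) < e"
    proof (intro exI[of _ "e / (K + 1)"] conjI allI impI)
      show "0 < e / (K + 1)" using \<open>e > 0\<close> K0 by simp
      fix n :: nat and a b :: "nat \<Rightarrow> real"
      assume h: "(\<forall>k<n. u \<le> a k \<and> a k \<le> b k \<and> b k \<le> v) \<and>
      (\<forall>j<n. \<forall>k<n. j \<noteq> k \<longrightarrow> b j \<le> a k \<or> b k \<le> a j) \<and>
      (\<Sum>k<n. b k - a k) < e / (K + 1)"
      have "(\<Sum>k<n. norm (f (b k) - f (a k))) \<le> (\<Sum>k<n. (K + 1) * (b k - a k))"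
      proof (intro sum_mono)
        fix k assume "k \<in> {..<n}"
        then have "a k \<le> b k" using h by auto
        from lip[OF this] show "norm (f (b k) - f (a k)) \<le> (K + 1) * (b k - a k)"
          by (simp add: algebra_simps)
      qed
      also have "\<dots> = (K + 1) * (\<Sum>k<n. b k - a k)" by (simp add: sum_distrib_left)
      also have "\<dots> < (K + 1) * (e / (K + 1))"
        using h K0 by (intro mult_strict_left_mono) auto
      also have "\<dots> = e" using K0 by simp
      finally show "(\<Sum>k<n. norm (f (b k) - f (a k))) < e" .
    qed
  qed
  have tv: "finite_total_variation f"
    unfolding finite_total_variation_def variation_sums_def bdd_above_def
  proof (intro exI[of _ "K * pi"] ballI)
    fix z assume "z \<in> {\<Sum>k<n. cmod (f (x (Suc k)) - f (x k)) |n x. \<forall>k<n. x k < x (Suc k)}"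
    then obtain n x where z: "z = (\<Sum>k<n. cmod (f (x (Suc k)) - f (x k)))"
      and mono: "\<forall>k<n. x k < x (Suc k)" by blast
    have "z \<le> (\<Sum>k<n. K * arctan (x (Suc k)) - K * arctan (x k))"
      unfolding z using mono var by (intro sum_mono) (auto intro: less_imp_le)
    also have "\<dots> = K * arctan (x n) - K * arctan (x 0)"
      by (rule sum_lessThan_telescope)
    also have "\<dots> = K * (arctan (x n) - arctan (x 0))" by (simp add: algebra_simps)
    also have "\<dots> \<le> K * pi"
      using arctan_bounded[of "x n"] arctan_bounded[of "x 0"] K0
      by (intro mult_left_mono) auto
    finally show "z \<le> K * pi" .
  qed
  show "in_V f" unfolding in_V_def using ac tv by auto
  have vd: "vector_derivative f (at x) = f' x" for x
    using der vector_derivative_at by blast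
  have meas: "(\<lambda>x. norm (f' x)) \<in> borel_measurable lebesgue"
    using cont
    by (intro borel_measurable_continuous_on[where f="\<lambda>x. norm (f' x)"] measurable_completion)
       (auto intro!: continuous_intros)
  have intK: "integrable lebesgue (\<lambda>x::real. K * inverse (1 + x\<^sup>2))"
    using integrable_w by simp
  have intf: "integrable lebesgue (\<lambda>x. norm (f' x))"
    by (rule Bochner_Integration.integrable_bound[OF intK meas]) (use bd K0 in auto)
  have "(\<integral>x. norm (vector_derivative f (at x)) \<partial>lebesgue) = (\<integral>x. norm (f' x) \<partial>lebesgue)"
    by (simp add: vd)
  also have "\<dots> \<le> (\<integral>x. K * inverse (1 + x\<^sup>2) \<partial>lebesgue)"
    by (rule integral_mono[OF intf intK]) (use bd in auto)
  also have "\<dots> = K * IW" by (simp add: IW_def)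
  finally have I: "(\<integral>x. norm (vector_derivative f (at x)) \<partial>lebesgue) \<le> K * IW" .
  have S: "(SUP x. norm (f x)) \<le> B"
    by (rule cSUP_least) (use fb in auto)
  show "V_norm f \<le> B + K * IW"
    unfolding V_norm_def using I S by linarith
qed

lemma exp_plus_exp_neg: "2 \<le> exp (a::real) + exp (-a)"
  using exp_ge_add_one_self[of a] exp_ge_add_one_self[of "-a"] by linarith

lemma sinh_lower1:
  fixes z :: complex assumes "0 \<le> sin (Im z)"
  shows "sin (Im z) \<le> norm (sinh z)"
proof -
  have "Im (sinh z) = (exp (Re z) + exp (- Re z)) / 2 * sin (Im z)"
    by (simp add: sinh_field_def Im_exp algebra_simps)
  also have "\<dots> \<ge> sin (Im z)"
    using exp_plus_exp_neg[of "Re z"] assms using mult_right_mono[of 1 "(exp (Re z) + exp (- Re z)) / 2" "sin (Im z)"] by simp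
  finally show ?thesis using abs_Im_le_cmod[of "sinh z"] by linarith
qed

lemma sinh_lower2:
  fixes z :: complex
  shows "(exp \<bar>Re z\<bar> - 1) / 2 \<le> norm (sinh z)"
proof -
  have "\<bar>norm (exp z) - norm (exp (-z))\<bar> \<le> norm (exp z - exp (-z))"
    by (rule norm_triangle_ineq3)
  moreover have "norm (exp z) = exp (Re z)" "norm (exp (-z)) = exp (- Re z)"
    by (simp_all add: norm_exp_eq_Re)
  moreover have "exp \<bar>Re z\<bar> - 1 \<le> \<bar>exp (Re z) - exp (- Re z)\<bar>"
  proof (cases "0 \<le> Re z")
    case True
    then have "exp (- Re z) \<le> 1" by simp
    then show ?thesis using True by simp
  next
    case False
    then have "exp (Re z) \<le> 1" by simp
    then show ?thesis using False by simp
  qed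
  ultimately have "exp \<bar>Re z\<bar> - 1 \<le> norm (exp z - exp (-z))" by linarith
  then show ?thesis by (simp add: sinh_field_def norm_divide)
qed

lemma cosh_upper:
  fixes z :: complex
  shows "norm (cosh z) \<le> exp \<bar>Re z\<bar>"
proof -
  have "norm (exp z + exp (-z)) \<le> norm (exp z) + norm (exp (-z))" by (rule norm_triangle_ineq)
  also have "\<dots> = exp (Re z) + exp (- Re z)" by (simp add: norm_exp_eq_Re)
  also have "\<dots> \<le> 2 * exp \<bar>Re z\<bar>"
    by (cases "0 \<le> Re z") auto
  finally show ?thesis by (simp add: cosh_field_def norm_divide)
qed

lemma weight:
  fixes y :: real assumes "0 \<le> y"
  shows "(1 + y) * (1 + y\<^sup>2) \<le> 27 * exp y"
proof -
  have "exp y = exp (y/3) ^ 3" by (simp flip: exp_of_nat_mult)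
  moreover have "1 + y/3 \<le> exp (y/3)" by (rule exp_ge_add_one_self)
  ultimately have "(1 + y/3) ^ 3 \<le> exp y" using assms by (metis power_mono add_nonneg_nonneg divide_nonneg_pos zero_le_one zero_less_numeral)
  moreover have "27 * (1 + y/3) ^ 3 = (3 + y) ^ 3"
    by (simp add: power3_eq_cube field_simps)
  moreover have "(3 + y) ^ 3 - (1 + y) * (1 + y\<^sup>2) = 26 + 26 * y + 8 * y\<^sup>2"
    by (simp add: power2_eq_square power3_eq_cube algebra_simps)
  moreover have "0 \<le> 26 + 26 * y + 8 * y\<^sup>2" using assms by simp
  ultimately show ?thesis by linarith
qed

definition Zp :: "real \<Rightarrow> real \<Rightarrow> complex" where
  "Zp p x = complex_of_real pi * (complex_of_real x + \<i> / complex_of_real p)"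
definition Xp :: "real \<Rightarrow> real \<Rightarrow> real \<Rightarrow> complex" where
  "Xp p w x = exp (\<i> * complex_of_real w * (complex_of_real x + \<i> / complex_of_real p))"
definition Gd :: "real \<Rightarrow> real \<Rightarrow> complex" where
  "Gd p x = - (complex_of_real pi * cosh (Zp p x) / (sinh (Zp p x))\<^sup>2)"
definition Fp' :: "real \<Rightarrow> real \<Rightarrow> real \<Rightarrow> complex" where
  "Fp' p w x = Xp p w x * (\<i> * complex_of_real w * r_p p x + Gd p x)"

lemma Fp_deriv:
  assumes "sinh (Zp p x) \<noteq> 0"
  shows "((\<lambda>x. exp (\<i> * complex_of_real w * (complex_of_real x + \<i> / complex_of_real p)) * r_p p x)
     has_vector_derivative Fp' p w x) (at x)"
proof -
  have "((\<lambda>z. exp (\<i> * complex_of_real w * (z + \<i> / complex_of_real p)) *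
          (1 / sinh (complex_of_real pi * (z + \<i> / complex_of_real p))))
     has_field_derivative Fp' p w x) (at (complex_of_real x))"
    using assms
    apply (auto intro!: derivative_eq_intros simp: Fp'_def Xp_def Gd_def r_p_def Zp_def)
    apply (simp add: field_simps power2_eq_square)
    done
  from has_vector_derivative_real_field[OF this] show ?thesis by (simp add: r_p_def)
qed

lemma Zp_Re: "Re (Zp p x) = pi * x" and Zp_Im: "Im (Zp p x) = pi / p"
  by (simp_all add: Zp_def Re_divide Im_divide power2_eq_square)

lemma sin_pp: "1 < p \<Longrightarrow> 0 < sin (pi / p)"
  by (rule sin_gt_zero) (auto simp: field_simps)

definition cp :: "real \<Rightarrow> real" where "cp p = min (sin (pi / p) / 2) (1 / 4)"
definition Ap :: "real \<Rightarrow> real" where "Ap p = 1 / cp p + pi / (cp p)\<^sup>2"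

lemma cp_pos: "1 < p \<Longrightarrow> 0 < cp p"
  using sin_pp[of p] by (simp add: cp_def)

lemma S_lower:
  assumes "1 < p"
  shows "cp p * exp (pi * \<bar>x\<bar>) \<le> norm (sinh (Zp p x))"
proof -
  define E where "E = exp (pi * \<bar>x\<bar>)"
  have l1: "sin (pi/p) \<le> norm (sinh (Zp p x))"
    using sinh_lower1[of "Zp p x"] sin_pp[OF assms] by (simp add: Zp_Im)
  have l2: "(E - 1) / 2 \<le> norm (sinh (Zp p x))"
    using sinh_lower2[of "Zp p x"] by (simp add: Zp_Re E_def abs_mult)
  have E0: "0 < E" by (simp add: E_def)
  show ?thesis
  proof (cases "2 \<le> E")
    case True
    have "cp p * E \<le> E / 4" using E0 by (simp add: cp_def min_def)
    also have "\<dots> \<le> (E - 1) / 2" using True by simp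
    finally show ?thesis using l2 by (simp add: E_def)
  next
    case False
    have "cp p * E \<le> sin (pi/p) / 2 * E"
      using E0 by (intro mult_right_mono) (auto simp: cp_def)
    also have "\<dots> \<le> sin (pi/p)" using False sin_pp[OF assms]
      using mult_left_mono[of E 2 "sin (pi/p) / 2"] by simp
    finally show ?thesis using l1 by (simp add: E_def)
  qed
qed

lemma S_nz: "1 < p \<Longrightarrow> sinh (Zp p x) \<noteq> 0"
  using S_lower[of p x] cp_pos[of p] by (auto simp: mult_le_0_iff)

lemma cosh_Zp: "norm (cosh (Zp p x)) \<le> exp (pi * \<bar>x\<bar>)"
  using cosh_upper[of "Zp p x"] by (simp add: Zp_Re abs_mult)

lemma rp_bound:
  assumes "1 < p"
  shows "norm (r_p p x) \<le> Ap p / exp (pi * \<bar>x\<bar>)"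
proof -
  define E where "E = exp (pi * \<bar>x\<bar>)"
  define c where "c = cp p"
  have c0: "0 < c" using cp_pos[OF assms] by (simp add: c_def)
  have E0: "0 < E" by (simp add: E_def)
  have S: "c * E \<le> norm (sinh (Zp p x))" using S_lower[OF assms] by (simp add: E_def c_def)
  have "norm (r_p p x) = 1 / norm (sinh (Zp p x))"
    by (simp add: r_p_def Zp_def norm_divide)
  also have "\<dots> \<le> 1 / (c * E)"
    using S c0 E0 by (intro divide_left_mono) (auto intro!: mult_pos_pos order.strict_trans2[OF _ S])
  also have "\<dots> \<le> Ap p / E"
    using c0 E0 by (simp add: Ap_def c_def[symmetric] divide_right_mono field_simps)
  finally show ?thesis by (simp add: E_def)
qed

lemma Gd_bound:
  assumes "1 < p"
  shows "norm (Gd p x) \<le> Ap p / exp (pi * \<bar>x\<bar>)"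
proof -
  define E where "E = exp (pi * \<bar>x\<bar>)"
  define c where "c = cp p"
  have c0: "0 < c" using cp_pos[OF assms] by (simp add: c_def)
  have E0: "0 < E" by (simp add: E_def)
  have S: "c * E \<le> norm (sinh (Zp p x))" using S_lower[OF assms] by (simp add: E_def c_def)
  have C: "norm (cosh (Zp p x)) \<le> E" using cosh_Zp by (simp add: E_def)
  have "norm (Gd p x) = pi * norm (cosh (Zp p x)) / (norm (sinh (Zp p x)))\<^sup>2"
    by (simp add: Gd_def norm_divide norm_mult norm_power)
  also have "\<dots> \<le> pi * E / (c * E)\<^sup>2"
    using S C c0 E0 by (intro frac_le mult_left_mono power_mono) auto
  also have "\<dots> = pi / c\<^sup>2 / E" using E0 by (simp add: power2_eq_square field_simps)
  also have "\<dots> \<le> Ap p / E"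
    using c0 E0 by (intro divide_right_mono) (auto simp: Ap_def c_def)
  finally show ?thesis by (simp add: E_def)
qed

lemma Xp_norm:
  assumes "1 < p" "\<bar>w\<bar> \<le> W"
  shows "norm (Xp p w x) \<le> exp W"
proof -
  have "norm (Xp p w x) = exp (- w / p)"
    by (simp add: Xp_def norm_exp_eq_Re Re_divide)
  also have "\<dots> \<le> exp W"
  proof -
    have "\<bar>w / p\<bar> \<le> \<bar>w\<bar>" using assms(1) by (simp add: abs_divide divide_le_eq mult_le_cancel_left1)
    moreover have "- (w / p) \<le> \<bar>w / p\<bar>" by linarith
    ultimately have "- w / p \<le> W" using assms(2) by linarith
    then show ?thesis by simp
  qed
  finally show ?thesis .
qed

lemma wt1: "(1 + \<bar>x\<bar>) / exp (pi * \<bar>x\<bar>) \<le> 27 * inverse (1 + x\<^sup>2)"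
proof -
  have "(1 + \<bar>x\<bar>) * (1 + \<bar>x\<bar>\<^sup>2) \<le> 27 * exp \<bar>x\<bar>" by (rule weight) simp
  also have "exp \<bar>x\<bar> \<le> exp (pi * \<bar>x\<bar>)"
    using pi_ge_two by (simp add: mult_le_cancel_right1)
  finally have "(1 + \<bar>x\<bar>) * (1 + x\<^sup>2) \<le> 27 * exp (pi * \<bar>x\<bar>)" by simp
  moreover have "0 < 1 + x\<^sup>2" by (simp add: add_pos_nonneg)
  ultimately show ?thesis by (simp add: field_simps)
qed

lemma wt0: "1 / exp (pi * \<bar>x\<bar>) \<le> 27 * inverse (1 + x\<^sup>2)"
  by (rule order_trans[OF _ wt1]) (simp add: divide_right_mono)

lemma wt_le: "27 * inverse (1 + (x::real)\<^sup>2) \<le> 27"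
proof -
  have "1 \<le> 1 + x\<^sup>2" by simp
  then show ?thesis by (simp add: inverse_le_1_iff)
qed

lemma Xp_deriv:
  "((\<lambda>w. Xp p w x) has_vector_derivative Xp p w x * (\<i> * (complex_of_real x + \<i> / complex_of_real p))) (at w)"
proof -
  have "((\<lambda>z. exp (\<i> * z * (complex_of_real x + \<i> / complex_of_real p)))
     has_field_derivative exp (\<i> * complex_of_real w * (complex_of_real x + \<i> / complex_of_real p)) * (\<i> * (complex_of_real x + \<i> / complex_of_real p))) (at (complex_of_real w))"
    by (auto intro!: derivative_eq_intros)
  from has_vector_derivative_real_field[OF this] show ?thesis by (simp add: Xp_def)
qed

lemma Xp_lip0:
  assumes "1 < p" "\<bar>w1\<bar> \<le> W" "\<bar>w2\<bar> \<le> W" "w1 < w2"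
  shows "norm (Xp p w2 x - Xp p w1 x) \<le> (1 + \<bar>x\<bar>) * exp W * w2 - (1 + \<bar>x\<bar>) * exp W * w1"
proof (rule differentiable_bound_general[OF assms(4)])
  show "continuous_on {w1..w2} (\<lambda>w. Xp p w x)"
    by (rule continuous_at_imp_continuous_on) (use Xp_deriv has_vector_derivative_continuous in blast)
  show "continuous_on {w1..w2} (\<lambda>w. (1 + \<bar>x\<bar>) * exp W * w)"
    by (intro continuous_intros)
  show "((\<lambda>w. Xp p w x) has_vector_derivative Xp p w x * (\<i> * (complex_of_real x + \<i> / complex_of_real p))) (at w)" for w
    by (rule Xp_deriv)
  show "((\<lambda>w. (1 + \<bar>x\<bar>) * exp W * w) has_vector_derivative (1 + \<bar>x\<bar>) * exp W) (at w)" for w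
    using has_real_derivative_iff_has_vector_derivative
    by (metis (no_types) DERIV_cmult_Id)
  fix w assume w: "w1 < w" "w < w2"
  then have wW: "\<bar>w\<bar> \<le> W" using assms by auto
  have n1: "norm (complex_of_real x + \<i> / complex_of_real p) \<le> 1 + \<bar>x\<bar>"
  proof -
    have "norm (complex_of_real x + \<i> / complex_of_real p) \<le> norm (complex_of_real x) + norm (\<i> / complex_of_real p)"
      by (rule norm_triangle_ineq)
    also have "norm (\<i> / complex_of_real p) \<le> 1" using assms(1) by (simp add: norm_divide)
    finally show ?thesis by simp
  qed
  have "norm (Xp p w x * (\<i> * (complex_of_real x + \<i> / complex_of_real p)))
      = norm (Xp p w x) * norm (complex_of_real x + \<i> / complex_of_real p)"
    by (simp add: norm_mult)
  also have "\<dots> \<le> exp W * (1 + \<bar>x\<bar>)"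
    using Xp_norm[OF assms(1) wW] n1 by (intro mult_mono) auto
  finally show "norm (Xp p w x * (\<i> * (complex_of_real x + \<i> / complex_of_real p))) \<le> (1 + \<bar>x\<bar>) * exp W"
    by (simp add: mult.commute)
qed

lemma Xp_lip:
  assumes "1 < p" "\<bar>w1\<bar> \<le> W" "\<bar>w2\<bar> \<le> W"
  shows "norm (Xp p w1 x - Xp p w2 x) \<le> \<bar>w1 - w2\<bar> * ((1 + \<bar>x\<bar>) * exp W)"
proof -
  consider "w1 < w2" | "w1 = w2" | "w2 < w1" by linarith
  then show ?thesis
  proof cases
    case 1
    from Xp_lip0[OF assms(1) assms(2,3) this, of x] show ?thesis
      using 1 by (simp add: norm_minus_commute algebra_simps)
  next
    case 3
    from Xp_lip0[OF assms(1) assms(3,2) this, of x] show ?thesis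
      using 3 by (simp add: algebra_simps)
  qed simp
qed

lemma Ap_pos: "1 < p \<Longrightarrow> 0 < Ap p"
  using cp_pos[of p] pi_gt_zero by (simp add: Ap_def add_pos_pos)

lemma Fp'_cont: "1 < p \<Longrightarrow> continuous_on UNIV (Fp' p w)"
  using S_nz[of p]
  unfolding Fp'_def Xp_def Gd_def r_p_def
  by (auto intro!: continuous_intros simp: Zp_def)

lemma R_wt: "1 < p \<Longrightarrow> Ap p / exp (pi * \<bar>x\<bar>) \<le> Ap p * (27 * inverse (1 + x\<^sup>2))"
  using wt0[of x] Ap_pos[of p] mult_left_mono[of "1 / exp (pi * \<bar>x\<bar>)" "27 * inverse (1 + x\<^sup>2)" "Ap p"]
  by simp

lemma R_wt1: "1 < p \<Longrightarrow> (1 + \<bar>x\<bar>) * (Ap p / exp (pi * \<bar>x\<bar>)) \<le> Ap p * (27 * inverse (1 + x\<^sup>2))"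
  using wt1[of x] Ap_pos[of p] mult_left_mono[of "(1 + \<bar>x\<bar>) / exp (pi * \<bar>x\<bar>)" "27 * inverse (1 + x\<^sup>2)" "Ap p"]
  by (simp add: field_simps)

lemma R_le: "1 < p \<Longrightarrow> Ap p / exp (pi * \<bar>x\<bar>) \<le> Ap p"
  using Ap_pos[of p] by (simp add: divide_le_eq mult_le_cancel_left1)

lemma F_V:
  assumes p: "1 < p" and w: "\<bar>w\<bar> \<le> W"
  shows "in_V (\<lambda>x. exp (\<i> * complex_of_real w * (complex_of_real x + \<i> / complex_of_real p)) * r_p p x)"
    and "V_norm (\<lambda>x. exp (\<i> * complex_of_real w * (complex_of_real x + \<i> / complex_of_real p)) * r_p p x)
         \<le> exp W * Ap p + (exp W * (W + 1) * Ap p * 27) * IW"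
proof -
  have W0: "0 \<le> W" using w by linarith
  have der: "((\<lambda>x. exp (\<i> * complex_of_real w * (complex_of_real x + \<i> / complex_of_real p)) * r_p p x)
     has_vector_derivative Fp' p w x) (at x)" for x
    by (rule Fp_deriv[OF S_nz[OF p]])
  have bd: "norm (Fp' p w x) \<le> (exp W * (W + 1) * Ap p * 27) * inverse (1 + x\<^sup>2)" for x
  proof -
    define R where "R = Ap p / exp (pi * \<bar>x\<bar>)"
    have R0: "0 \<le> R" using Ap_pos[OF p] by (simp add: R_def)
    have "norm (Fp' p w x) \<le> norm (Xp p w x) * (\<bar>w\<bar> * norm (r_p p x) + norm (Gd p x))"
      unfolding Fp'_def norm_mult
      by (intro mult_left_mono order_trans[OF norm_triangle_ineq]) (auto simp: norm_mult)
    also have "\<dots> \<le> exp W * (W * R + R)"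
      using Xp_norm[OF p w, of x] rp_bound[OF p, of x] Gd_bound[OF p, of x] w R0
      by (intro mult_mono add_mono) (auto simp: R_def intro!: mult_mono)
    also have "\<dots> = exp W * (W + 1) * R" by (simp add: algebra_simps)
    also have "\<dots> \<le> exp W * (W + 1) * (Ap p * (27 * inverse (1 + x\<^sup>2)))"
      using R_wt[OF p, of x] W0 by (intro mult_left_mono) (auto simp: R_def)
    finally show ?thesis by (simp add: algebra_simps)
  qed
  have fb: "norm (exp (\<i> * complex_of_real w * (complex_of_real x + \<i> / complex_of_real p)) * r_p p x) \<le> exp W * Ap p" for x
    using Xp_norm[OF p w, of x] order_trans[OF rp_bound[OF p, of x] R_le[OF p, of x]]
    unfolding norm_mult Xp_def by (intro mult_mono) auto
  show "in_V (\<lambda>x. exp (\<i> * complex_of_real w * (complex_of_real x + \<i> / complex_of_real p)) * r_p p x)"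
    by (rule generic_V(1)[OF der Fp'_cont[OF p] bd fb])
  show "V_norm (\<lambda>x. exp (\<i> * complex_of_real w * (complex_of_real x + \<i> / complex_of_real p)) * r_p p x)
         \<le> exp W * Ap p + (exp W * (W + 1) * Ap p * 27) * IW"
    by (rule generic_V(2)[OF der Fp'_cont[OF p] bd fb])
qed

lemma D_V:
  assumes p: "1 < p" and w1: "\<bar>w1\<bar> \<le> W" and w2: "\<bar>w2\<bar> \<le> W"
  shows "V_norm (\<lambda>x. exp (\<i> * complex_of_real w1 * (complex_of_real x + \<i> / complex_of_real p)) * r_p p x
                   - exp (\<i> * complex_of_real w2 * (complex_of_real x + \<i> / complex_of_real p)) * r_p p x)
         \<le> \<bar>w1 - w2\<bar> * (exp W * Ap p * 27 * (1 + (W + 2) * IW))"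
proof -
  define \<Delta> where "\<Delta> = \<bar>w1 - w2\<bar>"
  have W0: "0 \<le> W" using w1 by linarith
  have D0: "0 \<le> \<Delta>" by (simp add: \<Delta>_def)
  have A0: "0 < Ap p" by (rule Ap_pos[OF p])
  have der: "((\<lambda>x. exp (\<i> * complex_of_real w1 * (complex_of_real x + \<i> / complex_of_real p)) * r_p p x
                   - exp (\<i> * complex_of_real w2 * (complex_of_real x + \<i> / complex_of_real p)) * r_p p x)
     has_vector_derivative (Fp' p w1 x - Fp' p w2 x)) (at x)" for x
    by (intro has_vector_derivative_diff Fp_deriv[OF S_nz[OF p]])
  have cont: "continuous_on UNIV (\<lambda>x. Fp' p w1 x - Fp' p w2 x)"
    by (intro continuous_on_diff Fp'_cont[OF p])
  have bd: "norm (Fp' p w1 x - Fp' p w2 x) \<le> (\<Delta> * exp W * Ap p * (W + 2) * 27) * inverse (1 + x\<^sup>2)" for x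
  proof -
    define R where "R = Ap p / exp (pi * \<bar>x\<bar>)"
    have R0: "0 \<le> R" using A0 by (simp add: R_def)
    have eq: "Fp' p w1 x - Fp' p w2 x = (Xp p w1 x - Xp p w2 x) * (\<i> * complex_of_real w1 * r_p p x + Gd p x)
        + Xp p w2 x * (\<i> * complex_of_real (w1 - w2) * r_p p x)"
      by (simp add: Fp'_def algebra_simps)
    have n1: "norm (Xp p w1 x - Xp p w2 x) \<le> \<Delta> * ((1 + \<bar>x\<bar>) * exp W)"
      using Xp_lip[OF p w1 w2] by (simp add: \<Delta>_def)
    have n2: "norm (\<i> * complex_of_real w1 * r_p p x + Gd p x) \<le> W * R + R"
    proof -
      have a: "norm (r_p p x) \<le> R" "norm (Gd p x) \<le> R"
        using rp_bound[OF p, of x] Gd_bound[OF p, of x] by (simp_all add: R_def)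
      have "\<bar>w1\<bar> * norm (r_p p x) \<le> W * R" using a w1 R0 by (intro mult_mono) auto
      then show ?thesis using a(2)
        by (intro order_trans[OF norm_triangle_ineq] add_mono) (auto simp: norm_mult)
    qed
    have n3: "norm (Xp p w2 x * (\<i> * complex_of_real (w1 - w2) * r_p p x)) \<le> exp W * (\<Delta> * R)"
    proof -
      have a: "norm (r_p p x) \<le> R" using rp_bound[OF p, of x] by (simp add: R_def)
      have "norm (complex_of_real (w1 - w2)) = \<Delta>" unfolding \<Delta>_def norm_of_real ..
      then have "norm (\<i> * complex_of_real (w1 - w2) * r_p p x) \<le> \<Delta> * R"
        using a D0 by (simp add: norm_mult mult_left_mono)
      then show ?thesis using Xp_norm[OF p w2, of x] D0 R0
        unfolding norm_mult[of "Xp p w2 x"] by (intro mult_mono) auto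
    qed
    have "norm (Fp' p w1 x - Fp' p w2 x) \<le> \<Delta> * ((1 + \<bar>x\<bar>) * exp W) * (W * R + R) + exp W * (\<Delta> * R)"
      unfolding eq
      by (intro order_trans[OF norm_triangle_ineq] add_mono n3)
         (use D0 in \<open>auto simp: norm_mult intro!: mult_mono n1 n2\<close>)
    also have "\<dots> \<le> \<Delta> * exp W * (W + 2) * ((1 + \<bar>x\<bar>) * R)"
    proof -
      have "exp W * (\<Delta> * R) \<le> exp W * (\<Delta> * ((1 + \<bar>x\<bar>) * R))"
        using D0 R0 by (intro mult_left_mono) (auto simp: mult_le_cancel_right1)
      then show ?thesis by (simp add: algebra_simps)
    qed
    also have "\<dots> \<le> \<Delta> * exp W * (W + 2) * (Ap p * (27 * inverse (1 + x\<^sup>2)))"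
      using R_wt1[OF p, of x] W0 D0 by (intro mult_left_mono) (auto simp: R_def)
    finally show ?thesis by (simp add: algebra_simps)
  qed
  have fb: "norm (exp (\<i> * complex_of_real w1 * (complex_of_real x + \<i> / complex_of_real p)) * r_p p x
                   - exp (\<i> * complex_of_real w2 * (complex_of_real x + \<i> / complex_of_real p)) * r_p p x)
        \<le> \<Delta> * exp W * Ap p * 27" for x
  proof -
    define R where "R = Ap p / exp (pi * \<bar>x\<bar>)"
    have R0: "0 \<le> R" using A0 by (simp add: R_def)
    have "norm ((Xp p w1 x - Xp p w2 x) * r_p p x) \<le> (\<Delta> * ((1 + \<bar>x\<bar>) * exp W)) * R"
      unfolding norm_mult using Xp_lip[OF p w1 w2, of x] rp_bound[OF p, of x] R0
      by (intro mult_mono) (auto simp: R_def \<Delta>_def)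
    also have "\<dots> = \<Delta> * exp W * ((1 + \<bar>x\<bar>) * R)" by (simp add: algebra_simps)
    also have "\<dots> \<le> \<Delta> * exp W * (Ap p * 27)"
      using order_trans[OF R_wt1[OF p, of x] mult_left_mono[OF wt_le[of x]]] A0 D0
      by (intro mult_left_mono) (auto simp: R_def)
    finally show ?thesis by (simp add: Xp_def algebra_simps)
  qed
  have "V_norm (\<lambda>x. exp (\<i> * complex_of_real w1 * (complex_of_real x + \<i> / complex_of_real p)) * r_p p x
                   - exp (\<i> * complex_of_real w2 * (complex_of_real x + \<i> / complex_of_real p)) * r_p p x)
     \<le> \<Delta> * exp W * Ap p * 27 + (\<Delta> * exp W * Ap p * (W + 2) * 27) * IW"
    by (rule generic_V(2)[OF der cont bd fb])
  then show ?thesis by (simp add: \<Delta>_def algebra_simps)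
qed

lemma omega_props:
  assumes "SOS \<alpha>"
  shows "\<exists>W. \<forall>t>0. \<bar>ln (\<alpha> t / t)\<bar> \<le> W"
    and "\<And>t. 0 < t \<Longrightarrow> isCont (\<lambda>s. ln (\<alpha> s / s)) t"
proof -
  from assms have bij: "bij_betw \<alpha> {0<..} {0<..}" and C1: "C1_pos \<alpha>"
    and sm: "strict_mono_on {0<..} \<alpha>" and dpos: "\<forall>t>0. deriv \<alpha> t > 0"
    and bdd: "bounded ((\<lambda>t. ln (deriv \<alpha> t)) ` {0<..})"
    by (auto simp: SOS_def diffeo_pos_def)
  from C1 obtain d where d: "\<And>t. t > 0 \<Longrightarrow> (\<alpha> has_real_derivative d t) (at t)"
    by (auto simp: C1_pos_def)
  from bdd obtain C where C: "\<And>t. t > 0 \<Longrightarrow> \<bar>ln (deriv \<alpha> t)\<bar> \<le> C"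
    by (auto simp: bounded_iff)
  have dd: "deriv \<alpha> t = d t" if "t > 0" for t using d[OF that] by (rule DERIV_imp_deriv)
  have dup: "d t \<le> exp C" and dlo: "exp (- C) \<le> d t" if "t > 0" for t
  proof -
    have pos: "0 < d t" using dpos that dd[OF that] by auto
    have l: "\<bar>ln (d t)\<bar> \<le> C" using C[OF that] dd[OF that] by simp
    show "d t \<le> exp C" using l pos by (metis abs_le_D1 exp_ln exp_le_cancel_iff)
    show "exp (- C) \<le> d t" using l pos
      by (metis abs_le_iff exp_ln exp_le_cancel_iff minus_le_iff)
  qed
  have img: "\<alpha> ` {0<..} = {0<..}" using bij by (rule bij_betw_imp_surj_on)
  have apos: "0 < \<alpha> t" if "t > 0" for t using img that by auto
  have mvt: "\<exists>z>a. z < b \<and> \<alpha> b - \<alpha> a = (b - a) * d z" if "0 < a" "a < b" for a b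
    by (rule MVT2[OF that(2)]) (use that d in auto)
  have lo: "exp (- C) / 2 \<le> \<alpha> t / t" if t: "t > 0" for t
  proof -
    obtain z where z: "z > t/2" "z < t" "\<alpha> t - \<alpha> (t/2) = (t - t/2) * d z"
      using mvt[of "t/2" t] t by auto
    have "t * exp (- C) \<le> t * d z" using dlo[of z] z t by (intro mult_left_mono) auto
    moreover have "0 < \<alpha> (t/2)" using apos t by simp
    moreover have "\<alpha> t = \<alpha> (t/2) + (t * d z) / 2" using z(3) by (simp add: algebra_simps)
    ultimately have "t * (exp (- C) / 2) \<le> \<alpha> t" by linarith
    then show ?thesis using t by (simp add: field_simps)
  qed
  have up: "\<alpha> t / t \<le> 1 + exp C" if t: "t > 0" for t
  proof -
    obtain u where u: "u > 0" "\<alpha> u = t" using img t by (metis greaterThan_iff imageE)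
    have "\<alpha> t \<le> t + t * exp C"
    proof (cases "t \<le> u")
      case True
      then have "\<alpha> t \<le> \<alpha> u"
        using sm t u by (cases "t = u") (auto simp: strict_mono_on_def intro: less_imp_le)
      moreover have "0 \<le> t * exp C" using t by simp
      ultimately show ?thesis using u t by linarith
    next
      case False
      obtain z where z: "z > u" "z < t" "\<alpha> t - \<alpha> u = (t - u) * d z"
        using mvt[of u t] u False by auto
      have "(t - u) * d z \<le> t * exp C"
        using dup[of z] dlo[of z] z u order_trans[OF less_imp_le[OF exp_gt_zero[of "-C"]] dlo[of z]]
        by (intro mult_mono) (auto simp: less_imp_le)
      then show ?thesis using z u by simp
    qed
    then show ?thesis using t by (simp add: field_simps)
  qed
  show "\<exists>W. \<forall>t>0. \<bar>ln (\<alpha> t / t)\<bar> \<le> W"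
  proof (intro exI[of _ "\<bar>ln (exp (- C) / 2)\<bar> + \<bar>ln (1 + exp C)\<bar>"] allI impI)
    fix t :: real assume t: "t > 0"
    have r0: "0 < \<alpha> t / t" using apos t by simp
    have "ln (exp (- C) / 2) \<le> ln (\<alpha> t / t)" using lo[OF t] r0 by (subst ln_le_cancel_iff) auto
    moreover have "ln (\<alpha> t / t) \<le> ln (1 + exp C)" using up[OF t] r0
      by (subst ln_le_cancel_iff) (auto simp: add_pos_pos)
    ultimately show "\<bar>ln (\<alpha> t / t)\<bar> \<le> \<bar>ln (exp (- C) / 2)\<bar> + \<bar>ln (1 + exp C)\<bar>" by linarith
  qed
  fix t :: real assume t: "0 < t"
  have "isCont \<alpha> t" using d[OF t] by (rule DERIV_isCont)
  then show "isCont (\<lambda>s. ln (\<alpha> s / s)) t"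
    using t apos[OF t] by (auto intro!: continuous_intros)
qed

theorem lemma7p3:
  fixes p :: real and \<alpha> :: "real \<Rightarrow> real" and \<omega> :: "real \<Rightarrow> real"
  assumes "1 < p" and "SOS \<alpha>"
    and "\<And>t. 0 < t \<Longrightarrow> \<omega> t = ln (\<alpha> t / t)"
  shows "in_Cb_V (\<lambda>t x. exp (\<i> * complex_of_real (\<omega> t) * (complex_of_real x + \<i> / complex_of_real p))
                       * r_p p x)"
proof -
  note p = assms(1)
  obtain W where W': "\<And>t. t > 0 \<Longrightarrow> \<bar>ln (\<alpha> t / t)\<bar> \<le> W"
    using omega_props(1)[OF assms(2)] by blast
  have W: "\<bar>\<omega> t\<bar> \<le> W" if "t > 0" for t using W'[OF that] assms(3)[OF that] by simp
  have W0: "0 \<le> W" using W[of 1] by linarith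
  have IW0: "0 \<le> IW" unfolding IW_def by (rule integral_nonneg_AE) (simp add: add_pos_nonneg less_imp_le)
  define K0 where "K0 = exp W * Ap p * 27 * (1 + (W + 2) * IW)"
  have K0: "0 \<le> K0" unfolding K0_def using Ap_pos[OF p] W0 IW0 by simp
  show ?thesis
    unfolding in_Cb_V_def
  proof (intro conjI allI impI)
    fix t :: real assume t: "0 < t"
    show "in_V (\<lambda>x. exp (\<i> * complex_of_real (\<omega> t) * (complex_of_real x + \<i> / complex_of_real p)) * r_p p x)"
      by (rule F_V(1)[OF p W[OF t]])
  next
    fix t e :: real assume t: "0 < t" and e: "0 < e"
    have "isCont (\<lambda>s. ln (\<alpha> s / s)) t" by (rule omega_props(2)[OF assms(2) t])
    moreover have "0 < e / (K0 + 1)" using e K0 by simp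
    ultimately obtain \<delta> where \<delta>: "\<delta> > 0"
      and h: "\<And>s. dist s t < \<delta> \<Longrightarrow> dist (ln (\<alpha> s / s)) (ln (\<alpha> t / t)) < e / (K0 + 1)"
      unfolding continuous_at_eps_delta by blast
    show "\<exists>d>0. \<forall>s>0. \<bar>s - t\<bar> < d \<longrightarrow>
        V_norm (\<lambda>x. exp (\<i> * complex_of_real (\<omega> s) * (complex_of_real x + \<i> / complex_of_real p)) * r_p p x -
                     exp (\<i> * complex_of_real (\<omega> t) * (complex_of_real x + \<i> / complex_of_real p)) * r_p p x) < e"
    proof (intro exI[of _ \<delta>] conjI allI impI)
      fix s :: real assume s: "0 < s" and st: "\<bar>s - t\<bar> < \<delta>"
      have ds: "\<bar>\<omega> s - \<omega> t\<bar> < e / (K0 + 1)"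
        using h[of s] st assms(3)[OF s] assms(3)[OF t] by (simp add: dist_real_def)
      have "V_norm (\<lambda>x. exp (\<i> * complex_of_real (\<omega> s) * (complex_of_real x + \<i> / complex_of_real p)) * r_p p x -
                     exp (\<i> * complex_of_real (\<omega> t) * (complex_of_real x + \<i> / complex_of_real p)) * r_p p x)
          \<le> \<bar>\<omega> s - \<omega> t\<bar> * K0"
        using D_V[OF p W[OF s] W[OF t]] by (simp add: K0_def)
      also have "\<dots> \<le> \<bar>\<omega> s - \<omega> t\<bar> * (K0 + 1)" by (simp add: mult_left_mono)
      also have "\<dots> < e / (K0 + 1) * (K0 + 1)"
        using ds K0 by (intro mult_strict_right_mono) auto
      also have "\<dots> = e" using K0 by simp
      finally show "V_norm (\<lambda>x. exp (\<i> * complex_of_real (\<omega> s) * (complex_of_real x + \<i> / complex_of_real p)) * r_p p x -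
                     exp (\<i> * complex_of_real (\<omega> t) * (complex_of_real x + \<i> / complex_of_real p)) * r_p p x) < e" .
    qed (rule \<delta>)
  next
    show "\<exists>M. \<forall>t>0. V_norm (\<lambda>x. exp (\<i> * complex_of_real (\<omega> t) * (complex_of_real x + \<i> / complex_of_real p)) * r_p p x) \<le> M"
      using F_V(2)[OF p W] by blast
  qed
qed

end
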